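(* Let $n\ge1$ and let $a_1,\dots,a_n$ be real numbers with $\sum_{j=1}^n a_j=1$. Put $C(t)=\sum_{j=1}^n a_j\cos jt$ and $S(t)=\sum_{j=1}^n a_j\sin jt$. Then $$\rho=\min_{t\in\mathbb R}\{C(t):\ S(t)=0\}$$ is negative. *)

theory Defs
  imports Complex_Main
begin

definition Cpoly :: "nat \<Rightarrow> (nat \<Rightarrow> real) \<Rightarrow> real \<Rightarrow> real" where
  "Cpoly n a t = (\<Sum>j=1..n. a j * cos (real j * t))"

definition Spoly :: "nat \<Rightarrow> (nat \<Rightarrow> real) \<Rightarrow> real \<Rightarrow> real" where
  "Spoly n a t = (\<Sum>j=1..n. a j * sin (real j * t))"

end

theory Submission
  imports Defs "HOL-Complex_Analysis.Conformal_Mappings"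
begin

theorem lemma1:
  fixes n :: nat and a :: "nat \<Rightarrow> real"
  assumes "n \<ge> 1" and "(\<Sum>j=1..n. a j) = 1"
  shows "\<exists>t0. Spoly n a t0 = 0 \<and> (\<forall>t. Spoly n a t = 0 \<longrightarrow> Cpoly n a t0 \<le> Cpoly n a t)
              \<and> Cpoly n a t0 < 0"
proof -
  define P where "P z = (\<Sum>j=1..n. of_real (a j) * z ^ j)" for z :: complex
  have holP: "P holomorphic_on UNIV" unfolding P_def by (intro holomorphic_intros)
  have contP: "continuous_on UNIV P" using holP holomorphic_on_imp_continuous_on by blast
  have P0: "P 0 = 0" unfolding P_def by (simp add: power_0_left)
  have P1: "P 1 = 1" unfolding P_def using assms(2)
    by (metis (mono_tags, lifting) of_real_1 of_real_sum mult.right_neutral power_one sum.cong)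
  have Pcis: "P (cis t) = Complex (Cpoly n a t) (Spoly n a t)" for t
    unfolding P_def Cpoly_def Spoly_def
    by (simp add: complex_eq_iff Re_sum Im_sum cos_n_Re_cis_pow_n sin_n_Im_cis_pow_n)
  have nc: "\<not> P constant_on UNIV"
    using P0 P1 unfolding constant_on_def by (metis UNIV_I zero_neq_one)
  have openU: "open (P ` ball 0 1)"
    by (rule open_mapping_thm[OF holP]) (auto simp: nc)
  have "0 \<in> P ` ball 0 1" using P0 by force
  then obtain r where r: "r > 0" "ball 0 r \<subseteq> P ` ball 0 1"
    using openU open_contains_ball by blast
  define K where "K = P ` cball 0 1 \<inter> {w. Im w = 0}"
  have "compact (P ` cball 0 1)"
    by (rule compact_continuous_image) (use contP continuous_on_subset in auto)
  moreover have "closed {w::complex. Im w = 0}"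
    by (intro closed_Collect_eq continuous_intros)
  ultimately have cK: "compact K" unfolding K_def by (rule compact_Int_closed)
  have "0 \<in> K" unfolding K_def using P0 by force
  then have "K \<noteq> {}" by blast
  then obtain w where wK: "w \<in> K" and wmin: "\<And>y. y \<in> K \<Longrightarrow> Re w \<le> Re y"
    using continuous_attains_inf[OF cK _ continuous_on_Re[OF continuous_on_id]] by blast
  have "- complex_of_real (r/2) \<in> ball 0 r" using r by (simp add: dist_norm)
  then have "- complex_of_real (r/2) \<in> P ` ball 0 1" using r by blast
  then have "- complex_of_real (r/2) \<in> K" unfolding K_def by auto
  then have wneg: "Re w < 0" using wmin[of "- complex_of_real (r/2)"] r by simp
  have wnotU: "w \<notin> P ` ball 0 1"
  proof
    assume "w \<in> P ` ball 0 1"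
    then obtain e where e: "e > 0" "ball w e \<subseteq> P ` ball 0 1"
      using openU open_contains_ball by blast
    have "w - complex_of_real (e/2) \<in> ball w e" using e by (simp add: dist_norm)
    then have "w - complex_of_real (e/2) \<in> P ` ball 0 1" using e by blast
    then have "w - complex_of_real (e/2) \<in> K" using wK unfolding K_def by auto
    then show False using wmin[of "w - complex_of_real (e/2)"] e by simp
  qed
  from wK obtain z where z: "cmod z \<le> 1" "w = P z" and wIm: "Im w = 0" unfolding K_def by auto
  have "cmod z = 1" using z wnotU by force
  then have "z \<noteq> 0" by auto
  define t0 where "t0 = Arg z"
  have "cis t0 = z" unfolding t0_def using cis_Arg[OF \<open>z \<noteq> 0\<close>] \<open>cmod z = 1\<close>
    by (simp add: sgn_div_norm)
  then have wt: "w = Complex (Cpoly n a t0) (Spoly n a t0)" using z Pcis[of t0] by simp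
  show ?thesis
  proof (intro exI conjI allI impI)
    show "Spoly n a t0 = 0" using wt wIm by simp
    show "Cpoly n a t0 < 0" using wt wneg by simp
    fix t assume "Spoly n a t = 0"
    moreover have "P (cis t) \<in> P ` cball 0 1" by (rule imageI) simp
    ultimately have "P (cis t) \<in> K" unfolding K_def using Pcis[of t] by simp
    then show "Cpoly n a t0 \<le> Cpoly n a t" using wmin[of "P (cis t)"] wt Pcis[of t] by simp
  qed
qed

end
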